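(* Let $d\ge 1$, $\eta>0$, $g\in\mathbb{R}^d$ and $p\in\mathbb{R}^d$ with $\eta p\in[-1,0]^d$. Define $\psi:\operatorname{dom}\psi\to\mathbb{R}$ by $$\psi(\lambda)=\lambda-\sum_{i=1}^d (1-\eta p(i))\log(\lambda+\eta g(i)),\qquad \operatorname{dom}\psi=\{\lambda\in\mathbb{R}:\lambda+\eta g(i)>0\ \forall i\in[d]\}.$$ Then $\psi$ has a unique minimizer $\lambda^\star\in\operatorname{dom}\psi$. Moreover, defining $x\in\mathbb{R}^d$ and $\hat g\in\mathbb{R}^d$ by $$x(i)=\frac{1-\eta p(i)}{\lambda^\star+\eta g(i)},\qquad \hat g(i)=p(i)\cdot\frac{\lambda^\star+\eta g(i)}{1-\eta p(i)},\qquad i\in[d],$$ we have $x\in\Delta$, $x\odot\hat g=p$, and $$x\in\operatorname*{argmin}_{y\in\Delta}\ \langle g,y\rangle+\langle\hat g,y\rangle+\eta^{-1}h(y).$$ In other words, the pair $(x,\hat g)$ solves the system of equations $x\odot \hat g = p$, $x\in\operatorname{argmin}_{y\in\Delta}\langle g+\hat g,y\rangle+\eta^{-1}h(y)$.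
   Context: $\Delta=\{x\in\mathbb{R}^d: x(i)\ge 0\ \forall i,\ \sum_{i=1}^d x(i)=1\}$ is the probability simplex. $h$ is the log-barrier $h(x)=-d\log d-\sum_{i=1}^d\log x(i)$ (equal to $+\infty$ if some $x(i)=0$). $\odot$ denotes the entrywise product of vectors. $[d]=\{1,\dots,d\}$. *)

theory Defs
  imports "HOL-Analysis.Analysis"
begin

text \<open>Vectors in R^d are functions on a finite index type 'n, with d = CARD('n).\<close>

definition prob_simplex :: "('n::finite \<Rightarrow> real) set" where
  "prob_simplex = {x. (\<forall>i. 0 \<le> x i) \<and> (\<Sum>i\<in>UNIV. x i) = 1}"

definition inner_vec :: "('n::finite \<Rightarrow> real) \<Rightarrow> ('n \<Rightarrow> real) \<Rightarrow> real" where
  "inner_vec u v = (\<Sum>i\<in>UNIV. u i * v i)"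

definition logbarrier :: "('n::finite \<Rightarrow> real) \<Rightarrow> ereal" where
  "logbarrier x = (if (\<forall>i. 0 < x i)
     then ereal (- real CARD('n) * ln (real CARD('n)) - (\<Sum>i\<in>UNIV. ln (x i)))
     else \<infinity>)"

definition psi :: "real \<Rightarrow> ('n::finite \<Rightarrow> real) \<Rightarrow> ('n \<Rightarrow> real) \<Rightarrow> real \<Rightarrow> real" where
  "psi \<eta> g p lam = lam - (\<Sum>i\<in>UNIV. (1 - \<eta> * p i) * ln (lam + \<eta> * g i))"

definition psi_dom :: "real \<Rightarrow> ('n::finite \<Rightarrow> real) \<Rightarrow> real set" where
  "psi_dom \<eta> g = {lam. \<forall>i. 0 < lam + \<eta> * g i}"

definition objective :: "real \<Rightarrow> ('n::finite \<Rightarrow> real) \<Rightarrow> ('n \<Rightarrow> real) \<Rightarrow> ('n \<Rightarrow> real) \<Rightarrow> ereal" where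
  "objective \<eta> g gh y = ereal (inner_vec g y + inner_vec gh y) + ereal (1 / \<eta>) * logbarrier y"

end

theory Submission
  imports Defs
begin

lemma ln_lt_minus_one: "0 < (x::real) \<Longrightarrow> x \<noteq> 1 \<Longrightarrow> ln x < x - 1"
  using ln_eq_minus_one ln_le_minus_one by force

lemma psi_strict:
  fixes \<eta> :: real and g p :: "'n::finite \<Rightarrow> real"
  assumes a: "\<forall>i. 0 < 1 - \<eta> * p i"
    and L: "L \<in> psi_dom \<eta> g" and root: "(\<Sum>i\<in>UNIV. (1 - \<eta> * p i) / (L + \<eta> * g i)) = 1"
    and mu: "\<mu> \<in> psi_dom \<eta> g" and ne: "\<mu> \<noteq> L"
  shows "psi \<eta> g p L < psi \<eta> g p \<mu>"
proof -
  have Lp: "\<And>i. 0 < L + \<eta> * g i" using L by (auto simp: psi_dom_def)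
  have mp: "\<And>i. 0 < \<mu> + \<eta> * g i" using mu by (auto simp: psi_dom_def)
  have trm: "(1 - \<eta> * p i) * ln (\<mu> + \<eta> * g i) - (1 - \<eta> * p i) * ln (L + \<eta> * g i)
      < (\<mu> - L) * ((1 - \<eta> * p i) / (L + \<eta> * g i))" for i
  proof -
    define r where "r = (\<mu> + \<eta> * g i) / (L + \<eta> * g i)"
    have rp: "0 < r" using Lp[of i] mp[of i] by (simp add: r_def)
    have r1: "r \<noteq> 1" using Lp[of i] ne by (simp add: r_def)
    have "ln (\<mu> + \<eta> * g i) - ln (L + \<eta> * g i) = ln r"
      using Lp[of i] mp[of i] by (simp add: r_def ln_div)
    also have "\<dots> < r - 1" using ln_lt_minus_one[OF rp r1] .
    also have "r - 1 = (\<mu> - L) / (L + \<eta> * g i)"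
      using Lp[of i] by (simp add: r_def field_simps)
    finally have "ln (\<mu> + \<eta> * g i) - ln (L + \<eta> * g i) < (\<mu> - L) / (L + \<eta> * g i)" .
    then have "(1 - \<eta> * p i) * (ln (\<mu> + \<eta> * g i) - ln (L + \<eta> * g i))
       < (1 - \<eta> * p i) * ((\<mu> - L) / (L + \<eta> * g i))"
      using a by (intro mult_strict_left_mono) auto
    then show ?thesis by (simp add: algebra_simps)
  qed
  have "(\<Sum>i\<in>UNIV. (1 - \<eta> * p i) * ln (\<mu> + \<eta> * g i) - (1 - \<eta> * p i) * ln (L + \<eta> * g i))
      < (\<Sum>i\<in>UNIV. (\<mu> - L) * ((1 - \<eta> * p i) / (L + \<eta> * g i)))"
    by (rule sum_strict_mono, simp, simp, rule trm)
  also have "\<dots> = (\<mu> - L) * (\<Sum>i\<in>UNIV. (1 - \<eta> * p i) / (L + \<eta> * g i))"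
    by (rule sum_distrib_left[symmetric])
  also have "\<dots> = \<mu> - L" using root by simp
  finally show ?thesis by (simp add: psi_def sum_subtractf)
qed

lemma aux:
  fixes e A B C D K L :: real
  assumes "e * A - B + L \<le> e * C - D + L" "0 < e"
  shows "A + (1/e) * (K - B) \<le> C + (1/e) * (K - D)"
proof -
  have "e * (A + (1/e) * (K - B)) = e*A + K - B" "e * (C + (1/e) * (K - D)) = e*C + K - D"
    using assms(2) by (simp_all add: field_simps)
  then have "e * (A + (1/e) * (K - B)) \<le> e * (C + (1/e) * (K - D))"
    using assms(1) by linarith
  then show ?thesis using assms(2) by (simp add: mult_le_cancel_left_pos)
qed

theorem mainTheorem1:
  fixes \<eta> :: real and g p :: "'n::finite \<Rightarrow> real"
  assumes "\<eta> > 0"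
    and "\<forall>i. -1 \<le> \<eta> * p i \<and> \<eta> * p i \<le> 0"
  shows "(\<exists>!lam. lam \<in> psi_dom \<eta> g \<and> (\<forall>\<mu>\<in>psi_dom \<eta> g. psi \<eta> g p lam \<le> psi \<eta> g p \<mu>))
    \<and> (\<forall>lamS. lamS \<in> psi_dom \<eta> g \<and> (\<forall>\<mu>\<in>psi_dom \<eta> g. psi \<eta> g p lamS \<le> psi \<eta> g p \<mu>) \<longrightarrow>
        (let x = (\<lambda>i. (1 - \<eta> * p i) / (lamS + \<eta> * g i));
             gh = (\<lambda>i. p i * ((lamS + \<eta> * g i) / (1 - \<eta> * p i)))
         in x \<in> prob_simplex \<and> (\<forall>i. x i * gh i = p i) \<and>
            (\<forall>y\<in>prob_simplex. objective \<eta> g gh x \<le> objective \<eta> g gh y)))"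
proof -
  have a1: "\<And>i. 1 \<le> 1 - \<eta> * p i" and a2: "\<And>i. 1 - \<eta> * p i \<le> 2" using assms(2) by auto
  have apos: "\<forall>i. 0 < 1 - \<eta> * p i" using a1 by (smt (verit))
  define F where "F = (\<lambda>lam. \<Sum>i\<in>UNIV. (1 - \<eta> * p i) / (lam + \<eta> * g i))"
  define m where "m = Min (range (\<lambda>i. \<eta> * g i))"
  have mle: "\<And>i. m \<le> \<eta> * g i" unfolding m_def by (rule Min_le) auto
  have "m \<in> range (\<lambda>i. \<eta> * g i)" unfolding m_def by (rule Min_in) auto
  then obtain j where mj: "m = \<eta> * g j" by auto
  define d where "d = real CARD('n)"
  have d1: "1 \<le> d" unfolding d_def by (simp add: Suc_le_eq)
  define l1 where "l1 = 1 - m"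
  define l2 where "l2 = 2 * d - m"
  have l12: "l1 \<le> l2" using d1 by (simp add: l1_def l2_def)
  have F1: "1 \<le> F l1"
  proof -
    have "1 \<le> (1 - \<eta> * p j) / (l1 + \<eta> * g j)" using a1[of j] by (simp add: l1_def mj)
    also have "\<dots> \<le> F l1" unfolding F_def
    proof (rule member_le_sum)
      fix i show "0 \<le> (1 - \<eta> * p i) / (l1 + \<eta> * g i)"
        using apos mle[of i] by (intro divide_nonneg_pos) (auto simp: less_imp_le l1_def)
    qed auto
    finally show ?thesis .
  qed
  have F2: "F l2 \<le> 1"
  proof -
    have "F l2 \<le> (\<Sum>i\<in>(UNIV::'n set). 1 / d)" unfolding F_def
    proof (rule sum_mono)
      fix i
      have p: "2 * d \<le> l2 + \<eta> * g i" using mle[of i] by (simp add: l2_def)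
      have "(1 - \<eta> * p i) / (l2 + \<eta> * g i) \<le> 2 / (l2 + \<eta> * g i)"
        using a2[of i] p d1 by (intro divide_right_mono) auto
      also have "\<dots> \<le> 2 / (2 * d)" using p d1 by (intro divide_left_mono) auto
      finally show "(1 - \<eta> * p i) / (l2 + \<eta> * g i) \<le> 1 / d" using d1 by simp
    qed
    also have "\<dots> = 1" using d1 by (simp add: d_def)
    finally show ?thesis .
  qed
  have cont: "\<forall>x. l1 \<le> x \<and> x \<le> l2 \<longrightarrow> isCont F x"
  proof (intro allI impI)
    fix x assume "l1 \<le> x \<and> x \<le> l2"
    then have "\<And>i. x + \<eta> * g i \<noteq> 0" using mle by (smt (verit) l1_def)
    then show "isCont F x" unfolding F_def by (intro continuous_intros) auto
  qed
  obtain L where L12: "l1 \<le> L" "L \<le> l2" and FL: "F L = 1"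
    using IVT2[of F l2 1 l1, OF F2 F1 l12 cont] by auto
  have Ldom: "L \<in> psi_dom \<eta> g" using L12 mle by (auto simp: psi_dom_def l1_def) (smt (verit) mle)
  have Lroot: "(\<Sum>i\<in>UNIV. (1 - \<eta> * p i) / (L + \<eta> * g i)) = 1" using FL by (simp add: F_def)
  have Lmin: "\<forall>\<mu>\<in>psi_dom \<eta> g. psi \<eta> g p L \<le> psi \<eta> g p \<mu>"
    using psi_strict[OF apos Ldom Lroot] by (metis order.order_iff_strict)
  have uniq: "lamS = L" if "lamS \<in> psi_dom \<eta> g" "\<forall>\<mu>\<in>psi_dom \<eta> g. psi \<eta> g p lamS \<le> psi \<eta> g p \<mu>" for lamS
    using psi_strict[OF apos Ldom Lroot that(1)] that(2) Ldom by force
  have part2: "let x = (\<lambda>i. (1 - \<eta> * p i) / (L + \<eta> * g i));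
             gh = (\<lambda>i. p i * ((L + \<eta> * g i) / (1 - \<eta> * p i)))
         in x \<in> prob_simplex \<and> (\<forall>i. x i * gh i = p i) \<and>
            (\<forall>y\<in>prob_simplex. objective \<eta> g gh x \<le> objective \<eta> g gh y)"
  proof -
    define x where "x = (\<lambda>i. (1 - \<eta> * p i) / (L + \<eta> * g i))"
    define gh where "gh = (\<lambda>i. p i * ((L + \<eta> * g i) / (1 - \<eta> * p i)))"
    have Lp: "\<And>i. 0 < L + \<eta> * g i" using Ldom by (auto simp: psi_dom_def)
    have xp: "\<And>i. 0 < x i" using Lp apos by (simp add: x_def)
    have xs: "(\<Sum>i\<in>UNIV. x i) = 1" using Lroot by (simp add: x_def)
    have xsim: "x \<in> prob_simplex" using xp xs by (auto simp: prob_simplex_def less_imp_le)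
    have prod: "\<forall>i. x i * gh i = p i"
    proof
      fix i
      have "1 - \<eta> * p i \<noteq> 0" "L + \<eta> * g i \<noteq> 0" using Lp[of i] apos[rule_format, of i] by linarith+
      then show "x i * gh i = p i" by (simp add: x_def gh_def)
    qed
    have key: "\<eta> * (g i + gh i) = 1 / x i - L" for i
    proof -
      have "1 - \<eta> * p i \<noteq> 0" "L + \<eta> * g i \<noteq> 0" using Lp[of i] apos[rule_format, of i] by linarith+
      then show ?thesis by (simp add: x_def gh_def field_simps)
    qed
    define K where "K = - real CARD('n) * ln (real CARD('n))"
    have objx: "objective \<eta> g gh x = ereal ((\<Sum>i\<in>UNIV. (g i + gh i) * x i) + (1/\<eta>) * (K - (\<Sum>i\<in>UNIV. ln (x i))))"
      using xp by (simp add: objective_def logbarrier_def inner_vec_def K_def sum.distrib algebra_simps)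
    have objall: "objective \<eta> g gh x \<le> objective \<eta> g gh y" if y: "y \<in> prob_simplex" for y
    proof (cases "\<forall>i. 0 < y i")
      case False
      then have "objective \<eta> g gh y = \<infinity>" using assms(1)
        by (simp add: objective_def logbarrier_def)
      then show ?thesis by simp
    next
      case True
      have ys: "(\<Sum>i\<in>UNIV. y i) = 1" using y by (simp add: prob_simplex_def)
      have objy: "objective \<eta> g gh y = ereal ((\<Sum>i\<in>UNIV. (g i + gh i) * y i) + (1/\<eta>) * (K - (\<Sum>i\<in>UNIV. ln (y i))))"
        using True by (simp add: objective_def logbarrier_def inner_vec_def K_def sum.distrib algebra_simps)
      have pt: "\<eta> * (g i + gh i) * x i - ln (x i) + L * x i \<le> \<eta> * (g i + gh i) * y i - ln (y i) + L * y i" for i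
      proof -
        have xi: "0 < x i" "0 < y i" using xp True by auto
        have "ln (y i / x i) \<le> y i / x i - 1" using ln_le_minus_one xi by simp
        then have "ln (y i) - ln (x i) \<le> y i / x i - 1" using xi by (simp add: ln_div)
        moreover have "\<eta> * (g i + gh i) * z + L * z = z / x i" for z
        proof -
          have "\<eta> * (g i + gh i) * z + L * z = (\<eta> * (g i + gh i) + L) * z" by (simp add: algebra_simps)
          also have "\<dots> = (1 / x i) * z" using key[of i] by simp
          finally show ?thesis by simp
        qed
        moreover have "x i / x i = 1" using xi by simp
        ultimately show ?thesis by (smt (verit))
      qed
      have "(\<Sum>i\<in>UNIV. \<eta> * (g i + gh i) * x i - ln (x i) + L * x i)
          \<le> (\<Sum>i\<in>UNIV. \<eta> * (g i + gh i) * y i - ln (y i) + L * y i)"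
        by (rule sum_mono) (rule pt)
      then have "\<eta> * (\<Sum>i\<in>UNIV. (g i + gh i) * x i) - (\<Sum>i\<in>UNIV. ln (x i)) + L
          \<le> \<eta> * (\<Sum>i\<in>UNIV. (g i + gh i) * y i) - (\<Sum>i\<in>UNIV. ln (y i)) + L"
        using xs ys by (simp add: sum.distrib sum_subtractf sum_distrib_left[symmetric] mult.assoc)
      then have "(\<Sum>i\<in>UNIV. (g i + gh i) * x i) + (1/\<eta>) * (K - (\<Sum>i\<in>UNIV. ln (x i)))
          \<le> (\<Sum>i\<in>UNIV. (g i + gh i) * y i) + (1/\<eta>) * (K - (\<Sum>i\<in>UNIV. ln (y i)))"
        using assms(1) by (rule aux)
      then show ?thesis by (simp add: objx objy)
    qed
    show ?thesis using xsim prod objall unfolding Let_def x_def gh_def by blast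
  qed
  show ?thesis
  proof
    show "\<exists>!lam. lam \<in> psi_dom \<eta> g \<and> (\<forall>\<mu>\<in>psi_dom \<eta> g. psi \<eta> g p lam \<le> psi \<eta> g p \<mu>)"
      using Ldom Lmin uniq by blast
    show "\<forall>lamS. lamS \<in> psi_dom \<eta> g \<and> (\<forall>\<mu>\<in>psi_dom \<eta> g. psi \<eta> g p lamS \<le> psi \<eta> g p \<mu>) \<longrightarrow>
        (let x = (\<lambda>i. (1 - \<eta> * p i) / (lamS + \<eta> * g i));
             gh = (\<lambda>i. p i * ((lamS + \<eta> * g i) / (1 - \<eta> * p i)))
         in x \<in> prob_simplex \<and> (\<forall>i. x i * gh i = p i) \<and>
            (\<forall>y\<in>prob_simplex. objective \<eta> g gh x \<le> objective \<eta> g gh y))"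
      using uniq part2 by blast
  qed
qed

end
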